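(* Let $Q=(-\frac12,\frac12)^N$ and let $f:\mathbb{R}^N\times\mathbb{R}^d\to[0,+\infty)$ be measurable and $Q$-periodic in the first variable, Lipschitz continuous in the second variable, with $C_1|\zeta|\le f(x,\zeta)\le C_2(1+|\zeta|)$. Let $\mathcal{A}=\sum_{i=1}^NA^{(i)}\partial_{x_i}$ with $A^{(i)}\in\mathbb{R}^{M\times d}$. For $b\in\mathbb{R}^d$ and $\gamma\in Q$ define $$f^\gamma_{\mathcal{A}\text{-hom}}(b):=\inf_{R\in\mathbb{N}}\inf\Big\{\frac{1}{|RQ|}\int_{RQ}f(y+\gamma,b+w(y))\,dy:\ w\in L^1_{RQ\text{-per}}(\mathbb{R}^N;\mathbb{R}^d),\ \mathcal{A}w=0,\ \frac{1}{|RQ|}\int_{RQ}w=0\Big\},$$ and let $f_{\mathcal{A}\text{-hom}}(b):=f^0_{\mathcal{A}\text{-hom}}(b)$. Then $f_{\mathcal{A}\text{-hom}}(b)=f^\gamma_{\mathcal{A}\text{-hom}}(b)$ for every $b\in\mathbb{R}^d$ and $\gamma\in Q$.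
   Context: $L^1_{RQ\text{-per}}(\mathbb{R}^N;\mathbb{R}^d)$ denotes functions integrable on $RQ$ extended $RQ$-periodically to $\mathbb{R}^N$; $\mathcal{A}w=0$ is meant in the sense of distributions on $\mathbb{R}^N$. *)

theory Defs
  imports "HOL-Analysis.Analysis"
begin

definition cube :: "real \<Rightarrow> (real^'n) set" where
  "cube r = box (- ((r/2) *\<^sub>R One)) ((r/2) *\<^sub>R One)"

definition pderiv_i :: "'n \<Rightarrow> (real^'n \<Rightarrow> real) \<Rightarrow> real^'n \<Rightarrow> real" where
  "pderiv_i i \<phi> x = frechet_derivative \<phi> (at x) (axis i 1)"

fun iter_pderiv :: "'n list \<Rightarrow> (real^'n \<Rightarrow> real) \<Rightarrow> real^'n \<Rightarrow> real" where
  "iter_pderiv [] \<phi> = \<phi>"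
| "iter_pderiv (i # is) \<phi> = pderiv_i i (iter_pderiv is \<phi>)"

definition smooth_fun :: "(real^'n \<Rightarrow> real) \<Rightarrow> bool" where
  "smooth_fun \<phi> \<longleftrightarrow> (\<forall>is x. iter_pderiv is \<phi> differentiable (at x))"

definition test_fun :: "(real^'n \<Rightarrow> real) \<Rightarrow> bool" where
  "test_fun \<phi> \<longleftrightarrow> smooth_fun \<phi> \<and> compact (closure {x. \<phi> x \<noteq> 0})"

text \<open>A w = sum_i A^(i) d_i w = 0 in the sense of distributions on R^N
  (tested against scalar test functions, componentwise).\<close>
definition A_free :: "('n \<Rightarrow> real^'d^'m) \<Rightarrow> (real^'n \<Rightarrow> real^'d) \<Rightarrow> bool" where
  "A_free A w \<longleftrightarrow> (\<forall>\<phi>. test_fun \<phi> \<longrightarrow>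
     (\<Sum>i\<in>UNIV. A i *v integral UNIV (\<lambda>x. pderiv_i i \<phi> x *\<^sub>R w x)) = 0)"

definition admissible :: "('n \<Rightarrow> real^'d^'m) \<Rightarrow> nat \<Rightarrow> (real^'n \<Rightarrow> real^'d) \<Rightarrow> bool" where
  "admissible A R w \<longleftrightarrow>
     (\<forall>y i. w (y + real R *\<^sub>R axis i 1) = w y)
     \<and> w absolutely_integrable_on cube (real R)
     \<and> A_free A w
     \<and> integral (cube (real R)) w = 0"

definition f_hom :: "('n \<Rightarrow> real^'d^'m) \<Rightarrow> (real^'n \<Rightarrow> real^'d \<Rightarrow> real)
     \<Rightarrow> real^'n \<Rightarrow> real^'d \<Rightarrow> real" where
  "f_hom A f \<gamma> b = Inf {integral (cube (real R)) (\<lambda>y. f (y + \<gamma>) (b + w y)) / real R ^ CARD('n)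
       | R w. R \<ge> 1 \<and> admissible A R w}"

end

theory Submission
  imports Defs
begin


lemma One_nth_A: "(\<Sum>x\<in>(Basis::(real^'n) set). x $ j) = (\<Sum>x\<in>(Basis::(real^'n) set). (x \<bullet> axis j 1) * 1)"
  apply (rule sum.cong) apply simp apply (subst cart_eq_inner_axis) by simp
lemma One_nth_B: "(\<Sum>x\<in>(Basis::(real^'n) set). (x \<bullet> axis j 1) * 1) = 1"
   using sum_inner_Basis_eq[of "axis j (1::real)" "\<lambda>_. 1"]
    by (simp add: axis_in_Basis_iff)
lemma One_nth[simp]: "(\<Sum>x\<in>(Basis::(real^'n) set). x $ j) = 1"
  using One_nth_A One_nth_B by metis

lemma mem_cube_cart: "(y::real^'n) \<in> cbox (-((r/2) *\<^sub>R One)) ((r/2) *\<^sub>R One) \<longleftrightarrow> (\<forall>j. -(r/2) \<le> y$j \<and> y$j \<le> r/2)"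
  by (simp add: mem_box_cart)

lemma comp_shift[simp]: "(y + t *\<^sub>R axis i 1 :: real^'n) $ j = y$j + (if j = i then t else 0)"
  by (simp add: axis_def)

lemma inner_e[simp]: "(y::real^'n) \<bullet> axis i 1 = y$i"
  by (simp add: inner_axis)

lemma cube_split_iff: "(y::real^'n) \<in> cbox (-((r/2) *\<^sub>R One)) ((r/2) *\<^sub>R One) \<longleftrightarrow>
   (\<forall>j. j \<noteq> i \<longrightarrow> -(r/2) \<le> y$j \<and> y$j \<le> r/2) \<and> -(r/2) \<le> y$i \<and> y$i \<le> r/2"
  unfolding mem_cube_cart by metis

lemma cube_shift_iff: "(y + t *\<^sub>R axis i 1::real^'n) \<in> cbox (-((r/2) *\<^sub>R One)) ((r/2) *\<^sub>R One) \<longleftrightarrow>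
   (\<forall>j. j \<noteq> i \<longrightarrow> -(r/2) \<le> y$j \<and> y$j \<le> r/2) \<and> -(r/2) \<le> y$i + t \<and> y$i + t \<le> r/2"
  unfolding cube_split_iff[of _ r i] comp_shift by simp

lemma shift_set:
  fixes g :: "real^'n \<Rightarrow> 'b::real_normed_vector"
  assumes "(g has_integral I) S" "S = cbox p q"
  shows "((\<lambda>y. g(y+c)) has_integral I) {y. y + c \<in> S}"
proof -
  have "((\<lambda>y. g(y+c)) has_integral I) (cbox (p-c) (q-c))"
    using has_integral_shift_cbox assms by blast
  moreover have "cbox (p-c) (q-c) = {y. y + c \<in> S}"
    using assms(2) by (auto simp: mem_box_cart algebra_simps)
  ultimately show ?thesis by simp
qed

lemma per_int:
  fixes g :: "real^'n \<Rightarrow> 'b"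
  assumes "\<And>y. g (y + r *\<^sub>R e) = g y"
  shows "g (y + (real_of_int k * r) *\<^sub>R e) = g y"
proof -
  have natc: "g (y + (real n * r) *\<^sub>R e) = g y" for n y
  proof (induction n arbitrary: y)
    case 0 then show ?case by simp
  next
    case (Suc n)
    have "y + (real (Suc n) * r) *\<^sub>R e = (y + (real n * r) *\<^sub>R e) + r *\<^sub>R e"
      by (simp add: algebra_simps)
    then show ?case using assms Suc by (metis add.assoc)
  qed
  show ?thesis
  proof (cases "k \<ge> 0")
    case True
    then show ?thesis using natc[of y "nat k"] by simp
  next
    case False
    have "g (y + (real_of_int k * r) *\<^sub>R e) = g ((y + (real_of_int k * r) *\<^sub>R e) + (real (nat (-k)) * r) *\<^sub>R e)"
      using natc by metis
    also have "(y + (real_of_int k * r) *\<^sub>R e) + (real (nat (-k)) * r) *\<^sub>R e = y"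
      using False by (simp add: algebra_simps)
    finally show ?thesis .
  qed
qed

lemma one_axis_pos:
  fixes g :: "real^'n \<Rightarrow> 'b::banach"
  assumes r: "r > 0" and t: "0 \<le> t" "t \<le> r"
    and per: "\<And>y. g (y + r *\<^sub>R axis i 1) = g y"
    and int: "g integrable_on cbox (-((r/2) *\<^sub>R One)) ((r/2) *\<^sub>R One)"
  shows "((\<lambda>y. g (y + t *\<^sub>R axis i 1)) has_integral
           integral (cbox (-((r/2) *\<^sub>R One)) ((r/2) *\<^sub>R One)) g)
         (cbox (-((r/2) *\<^sub>R One)) ((r/2) *\<^sub>R One))"
proof -
  define a :: "real^'n" where "a = -((r/2) *\<^sub>R One)"
  define b :: "real^'n" where "b = (r/2) *\<^sub>R One"
  define e :: "real^'n" where "e = axis i 1"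
  have eB: "e \<in> Basis" unfolding e_def by (simp add: cart_eq_inner_axis)
  define L1 where "L1 = cbox a b \<inter> {x. x \<bullet> e \<le> t - r/2}"
  define U1 where "U1 = cbox a b \<inter> {x. x \<bullet> e \<ge> t - r/2}"
  define L2 where "L2 = cbox a b \<inter> {x. x \<bullet> e \<le> r/2 - t}"
  define U2 where "U2 = cbox a b \<inter> {x. x \<bullet> e \<ge> r/2 - t}"
  obtain p1 q1 where L1: "L1 = cbox p1 q1" using interval_split(1)[OF eB] L1_def by blast
  obtain p2 q2 where U1: "U1 = cbox p2 q2" using interval_split(2)[OF eB] U1_def by blast
  have iL1: "g integrable_on L1" unfolding L1_def
    using integrable_split(1)[OF int[folded a_def b_def] eB] by blast
  have iU1: "g integrable_on U1" unfolding U1_def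
    using integrable_split(2)[OF int[folded a_def b_def] eB] by blast
  have tot: "integral (cbox a b) g = integral L1 g + integral U1 g"
    unfolding L1_def U1_def using integral_split[OF int[folded a_def b_def] eB] by blast
  have h1: "((\<lambda>y. g(y + t *\<^sub>R e)) has_integral integral U1 g) {y. y + t *\<^sub>R e \<in> U1}"
    using shift_set[OF integrable_integral[OF iU1] U1] by blast
  have s1: "{y. y + t *\<^sub>R e \<in> U1} = L2"
    unfolding U1_def L2_def e_def a_def b_def
    using t apply (intro set_eqI) apply (simp only: mem_Collect_eq Int_iff cube_split_iff[of _ r i] inner_e comp_shift) by auto
  have h2: "((\<lambda>y. g(y + (t - r) *\<^sub>R e)) has_integral integral L1 g) {y. y + (t - r) *\<^sub>R e \<in> L1}"
    using shift_set[OF integrable_integral[OF iL1] L1] by blast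
  have s2: "{y. y + (t - r) *\<^sub>R e \<in> L1} = U2"
    unfolding L1_def U2_def e_def a_def b_def
    using t apply (intro set_eqI) apply (simp only: mem_Collect_eq Int_iff cube_split_iff[of _ r i] inner_e comp_shift) by auto
  have eq: "g(y + (t - r) *\<^sub>R e) = g(y + t *\<^sub>R e)" for y
  proof -
    have "y + t *\<^sub>R e = (y + (t - r) *\<^sub>R e) + r *\<^sub>R e" by (simp add: algebra_simps)
    then show ?thesis using per e_def by (metis add.assoc)
  qed
  have "((\<lambda>y. g(y + t *\<^sub>R e)) has_integral (integral U1 g + integral L1 g)) (cbox a b)"
    apply (rule has_integral_split[OF _ _ eB, where c="r/2 - t"])
    using h1 s1 h2 s2 eq L2_def U2_def by auto
  then show ?thesis using tot a_def b_def e_def by (simp add: add.commute)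
qed

lemma one_axis_any:
  fixes g :: "real^'n \<Rightarrow> 'b::banach"
  assumes r: "r > 0"
    and per: "\<And>y. g (y + r *\<^sub>R axis i 1) = g y"
    and int: "g integrable_on cbox (-((r/2) *\<^sub>R One)) ((r/2) *\<^sub>R One)"
  shows "((\<lambda>y. g (y + t *\<^sub>R axis i 1)) has_integral
           integral (cbox (-((r/2) *\<^sub>R One)) ((r/2) *\<^sub>R One)) g)
         (cbox (-((r/2) *\<^sub>R One)) ((r/2) *\<^sub>R One))"
proof -
  define k where "k = \<lfloor>t / r\<rfloor>"
  define s where "s = t - real_of_int k * r"
  have s0: "0 \<le> s" unfolding s_def k_def using floor_divide_lower[OF r, of t] by simp
  have s1: "s \<le> r" unfolding s_def k_def using floor_divide_upper[OF r, of t] by (simp add: algebra_simps)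
  have eq: "g (y + t *\<^sub>R axis i 1) = g (y + s *\<^sub>R axis i 1)" for y
  proof -
    have A: "y + t *\<^sub>R axis i 1 = (y + s *\<^sub>R axis i 1) + (real_of_int k * r) *\<^sub>R axis i 1"
      unfolding s_def by (simp add: algebra_simps)
    have B: "g ((y + s *\<^sub>R axis i 1) + (real_of_int k * r) *\<^sub>R axis i 1) = g (y + s *\<^sub>R axis i 1)"
      by (rule per_int) (rule per)
    show ?thesis by (subst A) (rule B)
  qed
  have "(\<lambda>y. g (y + t *\<^sub>R axis i 1)) = (\<lambda>y. g (y + s *\<^sub>R axis i 1))" using eq by (rule ext)
  then show ?thesis using one_axis_pos[OF r s0 s1 per int] by (simp only:)
qed

lemma multi_shift:
  fixes g :: "real^'n \<Rightarrow> 'b::banach"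
  assumes r: "r > 0"
    and per: "\<And>y i. g (y + r *\<^sub>R axis i 1) = g y"
    and int: "g integrable_on cbox (-((r/2) *\<^sub>R One)) ((r/2) *\<^sub>R One)"
  shows "((\<lambda>y. g (y + v)) has_integral
           integral (cbox (-((r/2) *\<^sub>R One)) ((r/2) *\<^sub>R One)) g)
         (cbox (-((r/2) *\<^sub>R One)) ((r/2) *\<^sub>R One))"
proof -
  let ?C = "cbox (-((r/2) *\<^sub>R One)) ((r/2) *\<^sub>R One) :: (real^'n) set"
  have "\<forall>g::real^'n \<Rightarrow> 'b. (\<forall>y i. g (y + r *\<^sub>R axis i 1) = g y) \<longrightarrow> g integrable_on ?C \<longrightarrow>
     ((\<lambda>y. g (y + (\<Sum>i\<in>S. v$i *\<^sub>R axis i 1))) has_integral integral ?C g) ?C"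
    if "finite S" for S :: "'n set"
    using that
  proof (induction S rule: finite_induct)
    case empty
    then show ?case by (simp add: integrable_integral)
  next
    case (insert j S)
    show ?case
    proof (intro allI impI)
      fix g :: "real^'n \<Rightarrow> 'b"
      assume pg: "\<forall>y i. g (y + r *\<^sub>R axis i 1) = g y" and ig: "g integrable_on ?C"
      define h where "h = (\<lambda>y. g (y + (\<Sum>i\<in>S. v$i *\<^sub>R axis i 1)))"
      have hI: "(h has_integral integral ?C g) ?C" using insert.IH pg ig h_def by blast
      have ph: "h (y + r *\<^sub>R axis i 1) = h y" for y i
      proof -
        have E: "y + r *\<^sub>R axis i 1 + (\<Sum>i\<in>S. v$i *\<^sub>R axis i 1) = (y + (\<Sum>i\<in>S. v$i *\<^sub>R axis i 1)) + r *\<^sub>R axis i 1"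
          by (simp add: algebra_simps)
        then show ?thesis unfolding h_def by (subst E) (rule pg[rule_format])
      qed
      have "((\<lambda>y. h (y + v$j *\<^sub>R axis j 1)) has_integral integral ?C h) ?C"
        using one_axis_any[OF r, of h j] ph hI by blast
      moreover have "integral ?C h = integral ?C g" using hI by (rule integral_unique)
      moreover have "(\<lambda>y. h (y + v$j *\<^sub>R axis j 1)) = (\<lambda>y. g (y + (\<Sum>i\<in>insert j S. v$i *\<^sub>R axis i 1)))"
        unfolding h_def using insert.hyps by (simp add: algebra_simps)
      ultimately show "((\<lambda>y. g (y + (\<Sum>i\<in>insert j S. v$i *\<^sub>R axis i 1))) has_integral integral ?C g) ?C"
        by simp
    qed
  qed
  from this[of UNIV] have "((\<lambda>y. g (y + (\<Sum>i\<in>UNIV. v$i *\<^sub>R axis i 1))) has_integral integral ?C g) ?C"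
    using per int by simp
  moreover have "(\<Sum>i\<in>UNIV. v$i *\<^sub>R axis i 1) = v"
    using basis_expansion[of v] by (simp add: scalar_mult_eq_scaleR)
  ultimately show ?thesis by simp
qed

lemma shift_integral_eq:
  fixes g :: "real^'n \<Rightarrow> 'b::banach"
  assumes r: "r > 0"
    and per: "\<And>y i. g (y + r *\<^sub>R axis i 1) = g y"
  shows "integral (cbox (-((r/2) *\<^sub>R One)) ((r/2) *\<^sub>R One)) (\<lambda>y. g (y + v)) =
         integral (cbox (-((r/2) *\<^sub>R One)) ((r/2) *\<^sub>R One)) g"
proof (cases "g integrable_on cbox (-((r/2) *\<^sub>R One)) ((r/2) *\<^sub>R One)")
  case True
  show ?thesis by (rule integral_unique[OF multi_shift[OF r per True]])
next
  case False
  have "\<not> (\<lambda>y. g (y + v)) integrable_on cbox (-((r/2) *\<^sub>R One)) ((r/2) *\<^sub>R One)"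
  proof
    assume i: "(\<lambda>y. g (y + v)) integrable_on cbox (-((r/2) *\<^sub>R One)) ((r/2) *\<^sub>R One)"
    have p2: "g (y + r *\<^sub>R axis i 1 + v) = g (y + v)" for y i
      using per[of "y + v" i] by (simp add: algebra_simps)
    have "((\<lambda>y. (\<lambda>y. g (y + v)) (y + -v)) has_integral integral (cbox (-((r/2) *\<^sub>R One)) ((r/2) *\<^sub>R One)) (\<lambda>y. g (y + v))) (cbox (-((r/2) *\<^sub>R One)) ((r/2) *\<^sub>R One))"
      by (rule multi_shift[OF r _ i]) (rule p2)
    then have "g integrable_on cbox (-((r/2) *\<^sub>R One)) ((r/2) *\<^sub>R One)"
      by (simp add: has_integral_integrable)
    then show False using False by simp
  qed
  then show ?thesis using False by (simp add: not_integrable_integral)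
qed



lemma UNIV_not_cbox: "\<not> (\<exists>a b. (UNIV::(real^'n) set) = cbox a b)"
  using bounded_cbox not_bounded_UNIV by metis

lemma has_integral_UNIV_shift:
  fixes g :: "real^'n \<Rightarrow> 'b::banach"
  assumes "(g has_integral I) UNIV"
  shows "((\<lambda>x. g (x + c)) has_integral I) UNIV"
proof (subst has_integral_alt, simp only: UNIV_not_cbox if_False, intro allI impI)
  fix e :: real assume e: "e > 0"
  obtain B where B: "B > 0" and HB: "\<forall>a b. ball 0 B \<subseteq> cbox a b \<longrightarrow>
      (\<exists>z. ((\<lambda>x. if x \<in> UNIV then g x else 0) has_integral z) (cbox a b) \<and> norm (z - I) < e)"
    using has_integral_altD[OF assms UNIV_not_cbox e] by blast
  show "\<exists>B>0. \<forall>a b. ball 0 B \<subseteq> cbox a b \<longrightarrow>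
      (\<exists>z. ((\<lambda>x. if x \<in> UNIV then g (x + c) else 0) has_integral z) (cbox a b) \<and> norm (z - I) < e)"
  proof (intro exI[of _ "B + norm c"] conjI allI impI)
    show "B + norm c > 0" using B by (simp add: add_pos_nonneg)
    fix a b :: "real^'n"
    assume sub: "ball 0 (B + norm c) \<subseteq> cbox a b"
    have "ball 0 B \<subseteq> cbox (a + c) (b + c)"
    proof
      fix y :: "real^'n" assume "y \<in> ball 0 B"
      then have "norm y < B" by simp
      then have "norm (y - c) < B + norm c" using norm_triangle_ineq4[of y c] by linarith
      then have "y - c \<in> cbox a b" using sub by (simp add: subset_eq)
      then show "y \<in> cbox (a + c) (b + c)" by (auto simp: mem_box algebra_simps inner_diff_left inner_add_left)
    qed
    from HB[rule_format, OF this] obtain z where z: "(g has_integral z) (cbox (a + c) (b + c))" "norm (z - I) < e"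
      by auto
    have "((\<lambda>x. g (x + c)) has_integral z) (cbox (a + c - c) (b + c - c))"
      by (rule has_integral_shift_cbox[OF z(1)])
    then show "\<exists>z. ((\<lambda>x. if x \<in> UNIV then g (x + c) else 0) has_integral z) (cbox a b) \<and> norm (z - I) < e"
      using z(2) by auto
  qed
qed

lemma integral_UNIV_shift:
  fixes g :: "real^'n \<Rightarrow> 'b::banach"
  shows "integral UNIV (\<lambda>x. g (x + c)) = integral UNIV g"
proof (cases "g integrable_on UNIV")
  case True
  then show ?thesis using has_integral_UNIV_shift integral_unique by (metis has_integral_integral)
next
  case False
  have "\<not> (\<lambda>x. g (x + c)) integrable_on UNIV"
  proof
    assume "(\<lambda>x. g (x + c)) integrable_on UNIV"
    from has_integral_UNIV_shift[OF integrable_integral[OF this], of "-c"]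
    have "((\<lambda>x. g (x + -c + c)) has_integral integral UNIV (\<lambda>x. g (x + c))) UNIV" .
    then have "(g has_integral integral UNIV (\<lambda>x. g (x + c))) UNIV" by simp
    then have "g integrable_on UNIV" by (rule has_integral_integrable)
    then show False using False by simp
  qed
  then show ?thesis using False by (simp add: not_integrable_integral)
qed

lemma has_derivative_shift_at:
  assumes "(h has_derivative f') (at (z + c))"
  shows "((\<lambda>z. h (z + c)) has_derivative f') (at z)"
proof -
  have "((+) c has_derivative (\<lambda>x. x)) (at z)" by (rule shift_has_derivative_id)
  moreover have "(h has_derivative f') (at ((+) c z))" using assms by (simp add: add.commute)
  ultimately have "((h \<circ> (+) c) has_derivative (f' \<circ> (\<lambda>x. x))) (at z)" by (rule diff_chain_at)
  then show ?thesis by (simp add: o_def add.commute)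
qed

lemma has_derivative_shift_iff:
  "((\<lambda>z. h (z + c)) has_derivative f') (at z) \<longleftrightarrow> (h has_derivative f') (at (z + c))"
proof
  assume "((\<lambda>z. h (z + c)) has_derivative f') (at z)"
  then have "((\<lambda>z. h (z + c)) has_derivative f') (at (z + c + -c))" by simp
  from has_derivative_shift_at[OF this] show "(h has_derivative f') (at (z + c))" by simp
qed (rule has_derivative_shift_at)

lemma frechet_shift:
  "frechet_derivative (\<lambda>z. h (z + c)) (at z) = frechet_derivative h (at (z + c))"
  unfolding frechet_derivative_def has_derivative_shift_iff ..

lemma iter_pderiv_shift:
  "iter_pderiv is (\<lambda>z. \<phi> (z + c)) = (\<lambda>z. iter_pderiv is \<phi> (z + c))"
proof (induction "is")
  case Nil then show ?case by simp
next
  case (Cons i "is")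
  show ?case by (rule ext) (simp add: Cons pderiv_i_def frechet_shift)
qed

lemma test_fun_shift:
  assumes "test_fun \<phi>"
  shows "test_fun (\<lambda>z. \<phi> (z + c))"
proof -
  have sm: "smooth_fun (\<lambda>z. \<phi> (z + c))"
    unfolding smooth_fun_def iter_pderiv_shift
  proof (intro allI)
    fix "is" x
    have "iter_pderiv is \<phi> differentiable (at (x + c))"
      using assms unfolding test_fun_def smooth_fun_def by blast
    then show "(\<lambda>z. iter_pderiv is \<phi> (z + c)) differentiable at x"
      unfolding differentiable_def has_derivative_shift_iff .
  qed
  have eq: "{x. \<phi> (x + c) \<noteq> 0} = (+) (-c) ` {x. \<phi> x \<noteq> 0}"
    by (auto simp: image_iff) (metis add.commute add_diff_cancel diff_minus_eq_add uminus_add_conv_diff)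
  have "compact (closure {x. \<phi> x \<noteq> 0})" using assms unfolding test_fun_def by blast
  then have "compact (closure {x. \<phi> (x + c) \<noteq> 0})"
    unfolding eq closure_translation by (rule compact_translation)
  then show ?thesis using sm unfolding test_fun_def by blast
qed

lemma A_free_shift:
  assumes "A_free A w"
  shows "A_free A (\<lambda>x. w (x + v))"
  unfolding A_free_def
proof (intro allI impI)
  fix \<phi> :: "real^'a \<Rightarrow> real"
  assume t: "test_fun \<phi>"
  define \<psi> where "\<psi> = (\<lambda>z. \<phi> (z + -v))"
  have t\<psi>: "test_fun \<psi>" unfolding \<psi>_def by (rule test_fun_shift[OF t])
  have pd: "pderiv_i i \<psi> = (\<lambda>z. pderiv_i i \<phi> (z + -v))" for i
    using iter_pderiv_shift[of "[i]" \<phi> "-v"] unfolding \<psi>_def by simp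
  have "integral UNIV (\<lambda>x. pderiv_i i \<phi> x *\<^sub>R w (x + v)) = integral UNIV (\<lambda>x. pderiv_i i \<psi> x *\<^sub>R w x)" for i
  proof -
    have "integral UNIV (\<lambda>x. pderiv_i i \<phi> x *\<^sub>R w (x + v)) = integral UNIV (\<lambda>x. (\<lambda>z. pderiv_i i \<psi> z *\<^sub>R w z) (x + v))"
      unfolding pd by simp
    also have "\<dots> = integral UNIV (\<lambda>z. pderiv_i i \<psi> z *\<^sub>R w z)" by (rule integral_UNIV_shift)
    finally show ?thesis .
  qed
  then show "(\<Sum>i\<in>UNIV. A i *v integral UNIV (\<lambda>x. pderiv_i i \<phi> x *\<^sub>R w (x + v))) = 0"
    using assms t\<psi> unfolding A_free_def by simp
qed



lemma admissible_shift:
  fixes w :: "real^'n \<Rightarrow> real^'d"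
  assumes adm: "admissible A R w" and R: "R \<ge> 1"
  shows "admissible A R (\<lambda>x. w (x + v))"
proof -
  have r: "real R > 0" using R by simp
  have pw: "w (y + real R *\<^sub>R axis i 1) = w y" for y i using adm unfolding admissible_def by blast
  have pw': "w (y + real R *\<^sub>R axis i 1 + v) = w (y + v)" for y i
    using pw[of "y + v" i] by (simp add: algebra_simps)
  have ai: "w absolutely_integrable_on cbox (-((real R/2) *\<^sub>R One)) ((real R/2) *\<^sub>R One)"
    using adm unfolding admissible_def cube_def absolutely_integrable_on_open_interval by blast
  then have iw: "w integrable_on cbox (-((real R/2) *\<^sub>R One)) ((real R/2) *\<^sub>R One)"
    and inw: "(\<lambda>x. norm (w x)) integrable_on cbox (-((real R/2) *\<^sub>R One)) ((real R/2) *\<^sub>R One)"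
    unfolding absolutely_integrable_on_def by auto
  have i1: "(\<lambda>x. w (x + v)) integrable_on cbox (-((real R/2) *\<^sub>R One)) ((real R/2) *\<^sub>R One)"
    using multi_shift[OF r _ iw, of v] pw by (meson has_integral_integrable)
  have i2: "(\<lambda>x. norm (w (x + v))) integrable_on cbox (-((real R/2) *\<^sub>R One)) ((real R/2) *\<^sub>R One)"
    using multi_shift[OF r _ inw, of v] pw by (metis (no_types, lifting) has_integral_integrable)
  have ab: "(\<lambda>x. w (x + v)) absolutely_integrable_on cube (real R)"
    unfolding cube_def absolutely_integrable_on_open_interval
    by (rule absolutely_integrable_integrable_bound[OF _ i1 i2]) simp
  have mean: "integral (cube (real R)) (\<lambda>x. w (x + v)) = 0"
  proof -
    have "integral (cube (real R)) (\<lambda>x. w (x + v)) = integral (cube (real R)) w"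
      unfolding cube_def integral_open_interval using shift_integral_eq[OF r, of w v] pw by blast
    then show ?thesis using adm unfolding admissible_def by simp
  qed
  have af: "A_free A (\<lambda>x. w (x + v))" using adm A_free_shift unfolding admissible_def by blast
  show ?thesis unfolding admissible_def using pw' ab mean af by blast
qed

theorem proposition2p15:
  fixes f :: "real^'n \<Rightarrow> real^'d \<Rightarrow> real"
    and A :: "'n \<Rightarrow> real^'d^'m"
    and C1 C2 L :: real
  assumes meas: "(\<lambda>p. f (fst p) (snd p)) \<in> borel_measurable lebesgue"
    and nonneg: "\<And>x z. f x z \<ge> 0"
    and per: "\<And>x z i. f (x + axis i 1) z = f x z"
    and lip: "\<And>x z z'. \<bar>f x z - f x z'\<bar> \<le> L * norm (z - z')"
    and C1: "C1 > 0"
    and growth: "\<And>x z. C1 * norm z \<le> f x z \<and> f x z \<le> C2 * (1 + norm z)"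
  shows "\<forall>b \<gamma>. \<gamma> \<in> cube 1 \<longrightarrow> f_hom A f 0 b = f_hom A f \<gamma> b"
proof (intro allI impI)
  fix b :: "real^'d" and \<gamma> :: "real^'n"
  have fR: "f (x + real R *\<^sub>R axis i 1) z = f x z" for x z i R
    using per_int[of "\<lambda>x. f x z" 1 "axis i 1" x "int R"] per by simp
  have key: "integral (cube (real R)) (\<lambda>y. g (y + v)) = integral (cube (real R)) g"
    if "R \<ge> 1" "\<And>y i. g (y + real R *\<^sub>R axis i 1) = g y" for R and g :: "real^'n \<Rightarrow> real" and v
    unfolding cube_def integral_open_interval
    by (rule shift_integral_eq) (use that in auto)
  have "{integral (cube (real R)) (\<lambda>y. f (y + 0) (b + w y)) / real R ^ CARD('n) | R w. R \<ge> 1 \<and> admissible A R w}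
      = {integral (cube (real R)) (\<lambda>y. f (y + \<gamma>) (b + w y)) / real R ^ CARD('n) | R w. R \<ge> 1 \<and> admissible A R w}"
    (is "?S0 = ?S1")
  proof
    show "?S0 \<subseteq> ?S1"
    proof
      fix x assume "x \<in> ?S0"
      then obtain R w where x: "x = integral (cube (real R)) (\<lambda>y. f (y + 0) (b + w y)) / real R ^ CARD('n)"
        and R: "R \<ge> 1" and adm: "admissible A R w" by blast
      have pw: "w (y + real R *\<^sub>R axis i 1) = w y" for y i using adm unfolding admissible_def by blast
      have E: "integral (cube (real R)) (\<lambda>y. f (y + \<gamma>) (b + w (y + \<gamma>))) = integral (cube (real R)) (\<lambda>y. f y (b + w y))"
        using key[OF R, of "\<lambda>y. f y (b + w y)" \<gamma>] by (simp add: fR pw)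
      have "x = integral (cube (real R)) (\<lambda>y. f (y + \<gamma>) (b + (\<lambda>y. w (y + \<gamma>)) y)) / real R ^ CARD('n)"
        by (simp only: x E add_0_right)
      moreover have "admissible A R (\<lambda>y. w (y + \<gamma>))" by (rule admissible_shift[OF adm R])
      ultimately show "x \<in> ?S1" using R
        by (simp only: mem_Collect_eq) (rule exI[of _ R], rule exI[of _ "\<lambda>y. w (y + \<gamma>)"], simp)
    qed
  next
    show "?S1 \<subseteq> ?S0"
    proof
      fix x assume "x \<in> ?S1"
      then obtain R w where x: "x = integral (cube (real R)) (\<lambda>y. f (y + \<gamma>) (b + w y)) / real R ^ CARD('n)"
        and R: "R \<ge> 1" and adm: "admissible A R w" by blast
      have pw: "w (y + real R *\<^sub>R axis i 1) = w y" for y i using adm unfolding admissible_def by blast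
      have pg: "f (y + real R *\<^sub>R axis i 1 + \<gamma>) (b + w (y + real R *\<^sub>R axis i 1)) = f (y + \<gamma>) (b + w y)" for y i
        using fR[where x="y + \<gamma>" and i=i and R=R] pw[of y i] by (simp add: algebra_simps)
      have E: "integral (cube (real R)) (\<lambda>y. f (y + 0) (b + w (y + -\<gamma>))) = integral (cube (real R)) (\<lambda>y. f (y + \<gamma>) (b + w y))"
        using key[OF R, of "\<lambda>y. f (y + \<gamma>) (b + w y)" "-\<gamma>"] pg by simp
      have "x = integral (cube (real R)) (\<lambda>y. f (y + 0) (b + (\<lambda>y. w (y + -\<gamma>)) y)) / real R ^ CARD('n)"
        by (simp only: x E)
      moreover have "admissible A R (\<lambda>y. w (y + -\<gamma>))" by (rule admissible_shift[OF adm R])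
      ultimately show "x \<in> ?S0" using R
        by (simp only: mem_Collect_eq) (rule exI[of _ R], rule exI[of _ "\<lambda>y. w (y + -\<gamma>)"], simp)
    qed
  qed
  then show "f_hom A f 0 b = f_hom A f \<gamma> b" unfolding f_hom_def by simp
qed

end
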